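(* For all $n \ge 5$, \[ w(n,1) = w(n-2,1) + w(n-3,0) - 1, \] where $w(m,k)$ is the number of compositions of $m$ with all parts in $\{1,2\}$ having exactly $k$ water cells.
   Context: A composition of $n \ge 0$ is a finite sequence $(c_1,\dots,c_t)$ of positive integers with $c_1+\cdots+c_t=n$; the empty composition is the unique composition of $0$. Let $C_{12}(n)$ be the set of compositions of $n$ all of whose parts lie in $\{1,2\}$. The number of water cells of a composition $(c_1,\dots,c_t)$ is $\sum_{i=1}^{t} \max\bigl(0, \min(\max_{j \le i} c_j, \max_{j \ge i} c_j) - c_i\bigr)$ (the number of unit squares that would hold water poured over its bargraph, in which column $i$ has height $c_i$). For $n,k \ge 0$, $W(n,k)$ is the set of compositions in $C_{12}(n)$ with exactly $k$ water cells and $w(n,k)=|W(n,k)|$. *)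

theory Defs
  imports Main
begin

definition C12 :: "nat \<Rightarrow> nat list set" where
  "C12 n = {cs. set cs \<subseteq> {1, 2} \<and> sum_list cs = n}"

text \<open>Water cells: sum over i of max(0, min(max_{j<=i} c_j, max_{j>=i} c_j) - c_i),
  with 0-based indices. Nat subtraction truncates, which realises the max with 0.\<close>
definition water :: "nat list \<Rightarrow> nat" where
  "water cs = (\<Sum>i<length cs.
      min (Max {cs ! j | j. j \<le> i}) (Max {cs ! j | j. i \<le> j \<and> j < length cs}) - cs ! i)"

definition W :: "nat \<Rightarrow> nat \<Rightarrow> nat list set" where
  "W n k = {cs \<in> C12 n. water cs = k}"

definition w :: "nat \<Rightarrow> nat \<Rightarrow> nat" where
  "w n k = card (W n k)"

end

theory Submission imports Defs begin

fun g :: "bool \<Rightarrow> nat list \<Rightarrow> nat" where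
  "g s [] = 0"
| "g s (x#xs) = (if x = 1 \<and> s \<and> 2 \<in> set xs then 1 else 0) + g (s \<or> x = 2) xs"

lemma sum_g:
  "(\<Sum>i<length cs. if cs!i = 1 \<and> (s \<or> 2 \<in> set (take i cs)) \<and> 2 \<in> set (drop i cs) then 1 else (0::nat)) = g s cs"
proof (induction cs arbitrary: s)
  case Nil then show ?case by simp
next
  case (Cons x xs)
  have "(\<Sum>i<length (x#xs). if (x#xs)!i = 1 \<and> (s \<or> 2 \<in> set (take i (x#xs))) \<and> 2 \<in> set (drop i (x#xs)) then 1 else (0::nat))
     = (if x = 1 \<and> s \<and> 2 \<in> set xs then 1 else 0) +
       (\<Sum>i<length xs. if xs!i = 1 \<and> ((s \<or> x = 2) \<or> 2 \<in> set (take i xs)) \<and> 2 \<in> set (drop i xs) then 1 else (0::nat))"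
    by (simp add: sum.lessThan_Suc_shift del: sum.lessThan_Suc) auto
  then show ?case using Cons.IH[of "s \<or> x = 2"] by simp
qed

lemma max_12:
  assumes "finite A" "A \<noteq> {}" "A \<subseteq> {1,2::nat}"
  shows "Max A = (if 2 \<in> A then 2 else 1)"
proof (cases "2 \<in> A")
  case True
  then show ?thesis using assms by (intro trans[OF Max_eqI[of A 2]]) auto
next
  case False
  then have "A = {1}" using assms by auto
  then show ?thesis using False by simp
qed

lemma water_g:
  assumes "set cs \<subseteq> {1,2}"
  shows "water cs = g False cs"
proof -
  have "water cs = (\<Sum>i<length cs. if cs!i = 1 \<and> (False \<or> 2 \<in> set (take i cs)) \<and> 2 \<in> set (drop i cs) then 1 else (0::nat))"
    unfolding water_def
  proof (rule sum.cong[OF refl])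
    fix i assume i: "i \<in> {..<length cs}"
    have L: "{cs ! j | j. j \<le> i} = set (take (Suc i) cs)"
      proof
    show "{cs ! j | j. j \<le> i} \<subseteq> set (take (Suc i) cs)"
    proof
      fix y assume "y \<in> {cs ! j | j. j \<le> i}"
      then obtain j where j: "j \<le> i" "y = cs ! j" by blast
      then have "take (Suc i) cs ! j = y" "j < length (take (Suc i) cs)" using i by auto
      then show "y \<in> set (take (Suc i) cs)" by (metis nth_mem)
    qed
  next
    show "set (take (Suc i) cs) \<subseteq> {cs ! j | j. j \<le> i}"
      using i by (auto simp: set_conv_nth)
  qed
    have R: "{cs ! j | j. i \<le> j \<and> j < length cs} = set (drop i cs)"
    proof
    show "{cs ! j | j. i \<le> j \<and> j < length cs} \<subseteq> set (drop i cs)"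
    proof
      fix y assume "y \<in> {cs ! j | j. i \<le> j \<and> j < length cs}"
      then obtain j where j: "i \<le> j" "j < length cs" "y = cs ! j" by blast
      then have "drop i cs ! (j - i) = y" "j - i < length (drop i cs)" by auto
      then show "y \<in> set (drop i cs)" by (metis nth_mem)
    qed
  next
    show "set (drop i cs) \<subseteq> {cs ! j | j. i \<le> j \<and> j < length cs}"
    proof
      fix y assume "y \<in> set (drop i cs)"
      then obtain k where k: "k < length (drop i cs)" "y = drop i cs ! k" by (metis in_set_conv_nth)
      then have "y = cs ! (i + k)" "i + k < length cs" using i by auto
      then show "y \<in> {cs ! j | j. i \<le> j \<and> j < length cs}" by force
    qed
  qed
    have ci: "cs ! i \<in> {1,2}" using i assms nth_mem by fastforce
    have ne1: "set (take (Suc i) cs) \<noteq> {}" using i by (auto simp: take_eq_Nil)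
    have ne2: "set (drop i cs) \<noteq> {}" using i by auto
    have s1: "set (take (Suc i) cs) \<subseteq> {1,2}" using assms set_take_subset by fastforce
    have s2: "set (drop i cs) \<subseteq> {1,2}" using assms set_drop_subset by fastforce
    have t: "take (Suc i) cs = take i cs @ [cs!i]" using i by (simp add: take_Suc_conv_app_nth)
    have d: "drop i cs = cs!i # drop (Suc i) cs" using i by (simp add: Cons_nth_drop_Suc)
    show "min (Max {cs ! j | j. j \<le> i}) (Max {cs ! j | j. i \<le> j \<and> j < length cs}) - cs ! i =
      (if cs!i = 1 \<and> (False \<or> 2 \<in> set (take i cs)) \<and> 2 \<in> set (drop i cs) then 1 else 0)"
      unfolding L R max_12[OF finite_set ne1 s1] max_12[OF finite_set ne2 s2]
      using ci unfolding t d by auto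
  qed
  then show ?thesis using sum_g[of cs False] by simp
qed


lemma g_rep1F: "g False (replicate a 1 @ xs) = g False xs"
  by (induction a) auto

lemma g_rep2: "g s (replicate b 2 @ xs) = g (s \<or> b > 0) xs"
  by (induction b arbitrary: s) auto

lemma g_rep1: "g s (replicate c 1) = 0"
  by (induction c arbitrary: s) auto
lemma g_rep1': "g s (replicate c (Suc 0)) = 0"
  using g_rep1 by simp

lemma G0T: "set cs \<subseteq> {1,2} \<Longrightarrow> g True cs = 0 \<Longrightarrow> \<exists>b c. cs = replicate b 2 @ replicate c 1"
proof (induction cs)
  case Nil then show ?case by simp
next
  case (Cons x xs)
  then obtain b c where bc: "xs = replicate b 2 @ replicate c 1" by (auto split: if_splits)
  show ?case
  proof (cases "x = 2")
    case True then show ?thesis using bc by (metis append_Cons replicate_Suc)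
  next
    case False
    then have x1: "x = 1" using Cons.prems by auto
    then have "2 \<notin> set xs" using Cons.prems by (auto split: if_splits)
    then have "b = 0" using bc by (cases b) auto
    then show ?thesis using bc x1 by (intro exI[of _ 0] exI[of _ "Suc c"]) simp
  qed
qed

lemma G0F: "set cs \<subseteq> {1,2} \<Longrightarrow> g False cs = 0 \<Longrightarrow> \<exists>a b c. cs = replicate a 1 @ replicate b 2 @ replicate c 1"
proof (induction cs)
  case Nil then show ?case by simp
next
  case (Cons x xs)
  show ?case
  proof (cases "x = 2")
    case True
    then obtain b c where "xs = replicate b 2 @ replicate c 1" using Cons.prems G0T[of xs] by auto
    then show ?thesis using True by (intro exI[of _ 0] exI[of _ "Suc b"] exI[of _ c]) simp
  next
    case False
    then have x1: "x = 1" using Cons.prems by auto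
    then obtain a b c where "xs = replicate a 1 @ replicate b 2 @ replicate c 1" using Cons by auto
    then show ?thesis using x1 by (intro exI[of _ "Suc a"] exI[of _ b] exI[of _ c]) simp
  qed
qed

lemma G1T: "set cs \<subseteq> {1,2} \<Longrightarrow> g True cs = 1 \<Longrightarrow>
   \<exists>b d c. cs = replicate b 2 @ 1 # 2 # replicate d 2 @ replicate c 1"
proof (induction cs)
  case Nil then show ?case by simp
next
  case (Cons x xs)
  show ?case
  proof (cases "x = 2")
    case True
    then obtain b d c where "xs = replicate b 2 @ 1 # 2 # replicate d 2 @ replicate c 1" using Cons by auto
    then show ?thesis using True by (intro exI[of _ "Suc b"] exI[of _ d] exI[of _ c]) simp
  next
    case False
    then have x1: "x = 1" using Cons.prems by auto
    show ?thesis
    proof (cases "2 \<in> set xs")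
      case True
      then have "g True xs = 0" using Cons.prems x1 by simp
      then obtain b c where bc: "xs = replicate b 2 @ replicate c 1" using Cons.prems G0T[of xs] by auto
      then have "b > 0" using True by (cases b) auto
      then obtain d where "b = Suc d" using not0_implies_Suc by blast
      then show ?thesis using bc x1 by (intro exI[of _ 0] exI[of _ d] exI[of _ c]) simp
    next
      case False
      then have "g True xs = 1" using Cons.prems x1 by simp
      then obtain b d c where "xs = replicate b 2 @ 1 # 2 # replicate d 2 @ replicate c 1" using Cons by auto
      then show ?thesis using False by simp
    qed
  qed
qed

lemma G1F: "set cs \<subseteq> {1,2} \<Longrightarrow> g False cs = 1 \<Longrightarrow>
   \<exists>a b d c. cs = replicate a 1 @ 2 # replicate b 2 @ 1 # 2 # replicate d 2 @ replicate c 1"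
proof (induction cs)
  case Nil then show ?case by simp
next
  case (Cons x xs)
  show ?case
  proof (cases "x = 2")
    case True
    then obtain b d c where "xs = replicate b 2 @ 1 # 2 # replicate d 2 @ replicate c 1"
      using Cons.prems G1T[of xs] by auto
    then show ?thesis using True by (intro exI[of _ 0] exI[of _ b] exI[of _ d] exI[of _ c]) simp
  next
    case False
    then have x1: "x = 1" using Cons.prems by auto
    then obtain a b d c where "xs = replicate a 1 @ 2 # replicate b 2 @ 1 # 2 # replicate d 2 @ replicate c 1"
      using Cons by auto
    then show ?thesis using x1 by (intro exI[of _ "Suc a"] exI[of _ b] exI[of _ d] exI[of _ c]) simp
  qed
qed

lemma L1: "x \<noteq> y \<Longrightarrow> replicate a x @ y # xs = replicate a' x @ y # ys \<Longrightarrow> a = a' \<and> xs = ys"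
proof (induction a arbitrary: a')
  case 0 then show ?case by (cases a') auto
next
  case (Suc a) then show ?case by (cases a') auto
qed

lemma L2: "x \<noteq> y \<Longrightarrow> replicate d x @ replicate c y = replicate d' x @ replicate c' y \<Longrightarrow> d = d' \<and> c = c'"
proof (induction d arbitrary: d')
  case 0
  show ?case
  proof (cases d')
    case 0 then show ?thesis using "0.prems" by (simp add: replicate_eq_replicate)
  next
    case (Suc e)
    then have "replicate c y = x # (replicate e x @ replicate c' y)" using "0.prems" by simp
    then have False using "0.prems"(1) by (cases c) simp_all
    then show ?thesis ..
  qed
next
  case (Suc d)
  note IH = Suc.IH and prems = Suc.prems
  show ?case
  proof (cases d')
    case 0
    then have "replicate c' y = x # (replicate d x @ replicate c y)" using prems by simp
    then have False using prems(1) by (cases c') simp_all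
    then show ?thesis ..
  next
    case (Suc e)
    have "replicate (Suc d) x @ replicate c y = replicate (Suc e) x @ replicate c' y" using prems(2) \<open>d' = Suc e\<close> by (simp only:)
    then have "replicate d x @ replicate c y = replicate e x @ replicate c' y" by (simp only: replicate_Suc append_Cons list.inject)
    then have "d = e \<and> c = c'" using IH prems(1) by blast
    then show ?thesis using \<open>d' = Suc e\<close> by simp
  qed
qed


definition f1 :: "nat \<times> nat \<times> nat \<times> nat \<Rightarrow> nat list" where
  "f1 = (\<lambda>(a,b,d,c). replicate a 1 @ 2 # replicate b 2 @ 1 # 2 # replicate d 2 @ replicate c 1)"
definition P1 :: "nat \<Rightarrow> (nat \<times> nat \<times> nat \<times> nat) set" where
  "P1 n = {(a,b,d,c). a + 2*b + 2*d + 5 + c = n}"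
definition f0 :: "nat \<times> nat \<times> nat \<Rightarrow> nat list" where
  "f0 = (\<lambda>(a,b,c). replicate a 1 @ 2 # replicate b 2 @ replicate c 1)"
definition Q :: "nat \<Rightarrow> (nat \<times> nat \<times> nat) set" where
  "Q n = {(a,b,c). a + 2*b + 2 + c = n}"

lemma inj_f1: "inj f1"
proof (rule injI)
  fix p q assume eq: "f1 p = f1 q"
  obtain a b d c where p: "p = (a,b,d,c)" by (cases p) auto
  obtain a' b' d' c' where q: "q = (a',b',d',c')" by (cases q) auto
  have e: "replicate a (1::nat) @ 2 # (replicate b 2 @ 1 # replicate (Suc d) 2 @ replicate c 1)
     = replicate a' 1 @ 2 # (replicate b' 2 @ 1 # replicate (Suc d') 2 @ replicate c' 1)"
    using eq unfolding p q f1_def by simp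
  from L1[OF _ e] have 1: "a = a'" and
    e2: "replicate b (2::nat) @ 1 # replicate (Suc d) 2 @ replicate c 1 = replicate b' 2 @ 1 # replicate (Suc d') 2 @ replicate c' 1"
    by auto
  from L1[OF _ e2] have 2: "b = b'" and e3: "replicate (Suc d) (2::nat) @ replicate c 1 = replicate (Suc d') 2 @ replicate c' (1::nat)"
    by auto
  from L2[OF _ e3] have "d = d'" "c = c'" by auto
  then show "p = q" using 1 2 p q by simp
qed

lemma inj_f0: "inj f0"
proof (rule injI)
  fix p q assume eq: "f0 p = f0 q"
  obtain a b c where p: "p = (a,b,c)" by (cases p) auto
  obtain a' b' c' where q: "q = (a',b',c')" by (cases q) auto
  have e: "replicate a (1::nat) @ 2 # (replicate b 2 @ replicate c 1)
     = replicate a' 1 @ 2 # (replicate b' 2 @ replicate c' 1)"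
    using eq unfolding p q f0_def by simp
  from L1[OF _ e] have 1: "a = a'" and e2: "replicate b (2::nat) @ replicate c 1 = replicate b' 2 @ replicate c' (1::nat)"
    by auto
  from L2[OF _ e2] have "b = b'" "c = c'" by auto
  then show "p = q" using 1 p q by simp
qed

lemma W1_eq: "W n 1 = f1 ` P1 n"
proof
  show "W n 1 \<subseteq> f1 ` P1 n"
  proof
    fix cs assume "cs \<in> W n 1"
    then have s: "set cs \<subseteq> {1,2}" and sl: "sum_list cs = n" and wt: "water cs = 1"
      unfolding W_def C12_def by auto
    then have "g False cs = 1" using water_g by simp
    then obtain a b d c where cs: "cs = replicate a 1 @ 2 # replicate b 2 @ 1 # 2 # replicate d 2 @ replicate c 1"
      using G1F[OF s] by blast
    have "(a,b,d,c) \<in> P1 n" using sl unfolding cs P1_def by (simp add: sum_list_replicate)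
    moreover have "cs = f1 (a,b,d,c)" unfolding cs f1_def by simp
    ultimately show "cs \<in> f1 ` P1 n" by blast
  qed
next
  show "f1 ` P1 n \<subseteq> W n 1"
  proof
    fix cs assume "cs \<in> f1 ` P1 n"
    then obtain a b d c where cs: "cs = replicate a 1 @ 2 # replicate b 2 @ 1 # 2 # replicate d 2 @ replicate c 1"
      and p: "a + 2*b + 2*d + 5 + c = n" unfolding f1_def P1_def by auto
    have s: "set cs \<subseteq> {1,2}" unfolding cs by auto
    have "g False cs = 1" unfolding cs g_rep1F
      by (simp add: g_rep2 g_rep1 g_rep1' flip: replicate_Suc)
    then show "cs \<in> W n 1" using s p water_g[OF s]
      unfolding W_def C12_def cs by (simp add: sum_list_replicate)
  qed
qed

lemma W0_eq: "W n 0 = insert (replicate n 1) (f0 ` Q n)"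
proof
  show "W n 0 \<subseteq> insert (replicate n 1) (f0 ` Q n)"
  proof
    fix cs assume "cs \<in> W n 0"
    then have s: "set cs \<subseteq> {1,2}" and sl: "sum_list cs = n" and wt: "water cs = 0"
      unfolding W_def C12_def by auto
    then have "g False cs = 0" using water_g by simp
    then obtain a b c where cs: "cs = replicate a 1 @ replicate b 2 @ replicate c 1"
      using G0F[OF s] by blast
    show "cs \<in> insert (replicate n 1) (f0 ` Q n)"
    proof (cases b)
      case 0
      then have "cs = replicate (a + c) 1" unfolding cs by (simp add: replicate_add)
      moreover have "a + c = n" using sl unfolding cs 0 by (simp add: sum_list_replicate)
      ultimately show ?thesis by simp
    next
      case (Suc e)
      have "(a,e,c) \<in> Q n" using sl unfolding cs Suc Q_def by (simp add: sum_list_replicate)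
      moreover have "cs = f0 (a,e,c)" unfolding cs Suc f0_def by simp
      ultimately show ?thesis by blast
    qed
  qed
next
  show "insert (replicate n 1) (f0 ` Q n) \<subseteq> W n 0"
  proof
    fix cs assume "cs \<in> insert (replicate n 1) (f0 ` Q n)"
    then consider "cs = replicate n 1" | a b c where "cs = replicate a 1 @ 2 # replicate b 2 @ replicate c 1"
      "a + 2*b + 2 + c = n" unfolding f0_def Q_def by auto
    then show "cs \<in> W n 0"
    proof cases
      case 1
      have s: "set cs \<subseteq> {1,2}" unfolding 1 by auto
      have "g False cs = 0" unfolding 1 by (simp add: g_rep1 g_rep1')
      then show ?thesis using water_g[OF s] s unfolding W_def C12_def 1 by (simp add: sum_list_replicate)
    next
      case 2
      have s: "set cs \<subseteq> {1,2}" unfolding 2 by auto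
      have "g False cs = 0" unfolding 2 g_rep1F by (simp add: g_rep2 g_rep1 g_rep1' flip: replicate_Suc)
      then show ?thesis using water_g[OF s] s 2(2) unfolding W_def C12_def 2(1) by (simp add: sum_list_replicate)
    qed
  qed
qed

lemma finite_P1: "finite (P1 n)"
  by (rule finite_subset[of _ "{..n} \<times> {..n} \<times> {..n} \<times> {..n}"]) (auto simp: P1_def)

lemma finite_Q: "finite (Q n)"
  by (rule finite_subset[of _ "{..n} \<times> {..n} \<times> {..n}"]) (auto simp: Q_def)

lemma w1: "w n 1 = card (P1 n)"
  unfolding w_def W1_eq by (simp add: card_image inj_on_subset[OF inj_f1])

lemma w0: "w n 0 = card (Q n) + 1"
proof -
  have "\<forall>p. 2 \<in> set (f0 p)" unfolding f0_def by auto
  moreover have "2 \<notin> set (replicate n (1::nat))" by simp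
  ultimately have "replicate n 1 \<notin> f0 ` Q n" by (metis imageE)
  then show ?thesis unfolding w_def W0_eq
    using finite_Q by (simp add: card_image inj_on_subset[OF inj_f0])
qed

lemma P1_rec:
  assumes "n \<ge> 5"
  shows "card (P1 n) = card (P1 (n-2)) + card (Q (n-3))"
proof -
  define h1 where "h1 = (\<lambda>(a::nat,b::nat,d::nat,c::nat). (a, Suc b, d, c))"
  define h2 where "h2 = (\<lambda>(a::nat,d::nat,c::nat). (a, 0::nat, d, c))"
  have eq: "P1 n = h1 ` P1 (n-2) \<union> h2 ` Q (n-3)"
  proof
    show "P1 n \<subseteq> h1 ` P1 (n-2) \<union> h2 ` Q (n-3)"
    proof
      fix p assume p: "p \<in> P1 n"
      obtain a b d c where pe: "p = (a,b,d,c)" by (cases p) auto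
      show "p \<in> h1 ` P1 (n-2) \<union> h2 ` Q (n-3)"
      proof (cases b)
        case 0
        then have "(a,d,c) \<in> Q (n-3)" "p = h2 (a,d,c)" using p pe unfolding P1_def Q_def h2_def by auto
        then show ?thesis by blast
      next
        case (Suc e)
        then have "(a,e,d,c) \<in> P1 (n-2)" "p = h1 (a,e,d,c)" using p pe unfolding P1_def h1_def by auto
        then show ?thesis by blast
      qed
    qed
  next
    show "h1 ` P1 (n-2) \<union> h2 ` Q (n-3) \<subseteq> P1 n"
      using assms unfolding P1_def Q_def h1_def h2_def by auto
  qed
  have d: "h1 ` P1 (n-2) \<inter> h2 ` Q (n-3) = {}" unfolding h1_def h2_def by auto
  have i1: "inj h1" unfolding h1_def by (auto intro!: injI)
  have i2: "inj h2" unfolding h2_def by (auto intro!: injI)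
  show ?thesis unfolding eq
    by (subst card_Un_disjoint) (auto simp: finite_P1 finite_Q d card_image inj_on_subset[OF i1] inj_on_subset[OF i2])
qed

theorem theorem2p3:
  fixes n :: nat
  assumes "n \<ge> 5"
  shows "int (w n 1) = int (w (n - 2) 1) + int (w (n - 3) 0) - 1"
  using P1_rec[OF assms] unfolding w1 w0 by simp

end
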